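(* Let $r\in(0,1)$ and let $p=T^3+rT^2+T+r$ over $\mathbb T$. Then a polynomial $q$ over $\mathbb T$ satisfies $p\in(T+r)\boxdot q$ if and only if $q=T^2+sT+1$ for some $s\in[0,r]$. In particular $r^{-2}T^2+r^{-1}T+1$ is not such a quotient.
   Context: The tropical hyperfield $\mathbb T$ is $\mathbb R_{\ge0}$ with usual multiplication and hyperaddition $a\boxplus b=\{\max\{a,b\}\}$ if $a\ne b$, $a\boxplus a=[0,a]$ (so $c\in a\boxplus b$ iff the maximum of $a,b,c$ is attained at least twice). Polynomials over $\mathbb T$ are finitely supported sequences $\sum c_iT^i$; the hyperproduct is $p\boxdot q=\{\sum e_iT^i : e_i\in \boxplus_{k+l=i} c_kd_l\}$, with iterated sums $\boxplus_{i=1}^n a_i=\bigcup_{b\in\boxplus_{i=1}^{n-1}a_i} b\boxplus a_n$. *)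

theory Defs
  imports Main "HOL.Real"
begin

text \<open>Tropical hyperfield: elements are nonnegative reals.
  Hyperaddition: a \<boxplus> b = {max a b} if a \<noteq> b, and [0,a] if a = b.\<close>

definition thadd :: "real \<Rightarrow> real \<Rightarrow> real set" where
  "thadd a b = (if a \<noteq> b then {max a b} else {x. 0 \<le> x \<and> x \<le> a})"

fun thsum_aux :: "real set \<Rightarrow> real list \<Rightarrow> real set" where
  "thsum_aux S [] = S"
| "thsum_aux S (a # as) = thsum_aux (\<Union>b\<in>S. thadd b a) as"

fun thsum :: "real list \<Rightarrow> real set" where
  "thsum [] = {0}"
| "thsum (a # as) = thsum_aux {a} as"

definition tpoly :: "(nat \<Rightarrow> real) set" where
  "tpoly = {c. (\<forall>i. 0 \<le> c i) \<and> finite {i. c i \<noteq> 0}}"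

definition tpoly_of_list :: "real list \<Rightarrow> nat \<Rightarrow> real" where
  "tpoly_of_list xs = (\<lambda>i. if i < length xs then xs ! i else 0)"

definition thprod :: "(nat \<Rightarrow> real) \<Rightarrow> (nat \<Rightarrow> real) \<Rightarrow> (nat \<Rightarrow> real) set" where
  "thprod c d = {e. \<forall>i. e i \<in> thsum (map (\<lambda>k. c k * d (i - k)) [0..<Suc i])}"

end

theory Submission
  imports Defs
begin

lemma thadd_nonneg: "0 \<le> a \<Longrightarrow> 0 \<le> b \<Longrightarrow> x \<in> thadd a b \<Longrightarrow> 0 \<le> x"
  by (auto simp: thadd_def split: if_splits simp: max_def)

lemma thsum_aux_zeros:
  "\<forall>x\<in>S. 0 \<le> x \<Longrightarrow> \<forall>a\<in>set as. a = 0 \<Longrightarrow> thsum_aux S as = S"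
proof (induction as arbitrary: S)
  case Nil then show ?case by simp
next
  case (Cons a as)
  have "(\<Union>b\<in>S. thadd b a) = S"
  proof -
    have "thadd b 0 = {b}" if "b \<in> S" for b
      using that Cons.prems(1) by (auto simp: thadd_def max_def)
    then show ?thesis using Cons.prems(2) by auto
  qed
  then show ?case using Cons by simp
qed

lemma thprod_char:
  fixes r :: real
  assumes r: "0 \<le> r" and d: "\<forall>i. 0 \<le> d i"
  shows "e \<in> thprod (tpoly_of_list [r, 1]) d \<longleftrightarrow>
    e 0 = r * d 0 \<and> (\<forall>j. e (Suc j) \<in> thadd (r * d (Suc j)) (d j))"
proof -
  let ?c = "tpoly_of_list [r, 1]"
  have s0: "thsum (map (\<lambda>k. ?c k * d (0 - k)) [0..<Suc 0]) = {r * d 0}"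
    by (simp add: tpoly_of_list_def)
  have sS: "thsum (map (\<lambda>k. ?c k * d (Suc j - k)) [0..<Suc (Suc j)]) = thadd (r * d (Suc j)) (d j)" for j
  proof -
    let ?f = "\<lambda>k. ?c k * d (Suc j - k)"
    have eq: "[0..<Suc (Suc j)] = 0 # 1 # [2..<Suc (Suc j)]"
      by (simp add: upt_conv_Cons numeral_2_eq_2 del: upt_Suc)
    have m: "map ?f [0..<Suc (Suc j)] = ?f 0 # ?f 1 # map ?f [2..<Suc (Suc j)]"
      by (simp only: eq list.map)
    have f0: "?f 0 = r * d (Suc j)" and f1: "?f 1 = d j"
      by (simp_all add: tpoly_of_list_def)
    have "thsum (map ?f [0..<Suc (Suc j)])
       = thsum_aux (thadd (r * d (Suc j)) (d j)) (map ?f [2..<Suc (Suc j)])"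
      by (simp only: m f0 f1 thsum.simps thsum_aux.simps) (simp del: upt_Suc)
    also have "\<dots> = thadd (r * d (Suc j)) (d j)"
    proof (rule thsum_aux_zeros)
      show "\<forall>x\<in>thadd (r * d (Suc j)) (d j). 0 \<le> x"
        using thadd_nonneg[of "r * d (Suc j)" "d j"] r d by auto
      show "\<forall>a\<in>set (map ?f [2..<Suc (Suc j)]). a = 0"
        by (auto simp: tpoly_of_list_def)
    qed
    finally show ?thesis .
  qed
  show ?thesis
    unfolding thprod_def
  proof safe
    assume that: "\<forall>i. e i \<in> thsum (map (\<lambda>k. ?c k * d (i - k)) [0..<Suc i])"
    show "e 0 = r * d 0" "e (Suc j) \<in> thadd (r * d (Suc j)) (d j)" for j
      using spec[OF that, of 0] spec[OF that, of "Suc j"] s0 sS[of j] by simp_all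
  next
    fix i
    assume "e 0 = r * d 0" "\<forall>j. e (Suc j) \<in> thadd (r * d (Suc j)) (d j)"
    then show "e i \<in> thsum (map (\<lambda>k. ?c k * d (i - k)) [0..<Suc i])"
      using s0 sS by (cases i) (simp_all del: upt_Suc)
  qed
qed

lemma thadd_mem: "x \<in> thadd a b \<longleftrightarrow> (a \<noteq> b \<and> x = max a b) \<or> (a = b \<and> 0 \<le> x \<and> x \<le> a)"
  by (auto simp: thadd_def)

theorem mainTheorem8:
  fixes r :: real
  assumes "0 < r" and "r < 1"
  shows "(\<forall>q \<in> tpoly.
            tpoly_of_list [r, 1, r, 1] \<in> thprod (tpoly_of_list [r, 1]) q
            \<longleftrightarrow> (\<exists>s. 0 \<le> s \<and> s \<le> r \<and> q = tpoly_of_list [1, s, 1]))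
       \<and> tpoly_of_list [r, 1, r, 1] \<notin>
            thprod (tpoly_of_list [r, 1]) (tpoly_of_list [1, 1 / r, 1 / r ^ 2])"
proof
  let ?p = "tpoly_of_list [r, 1, r, 1]"
  show "\<forall>q \<in> tpoly. ?p \<in> thprod (tpoly_of_list [r, 1]) q
            \<longleftrightarrow> (\<exists>s. 0 \<le> s \<and> s \<le> r \<and> q = tpoly_of_list [1, s, 1])"
  proof
    fix q assume q: "q \<in> tpoly"
    have d: "\<forall>i. 0 \<le> q i" and fin: "finite {i. q i \<noteq> 0}" using q by (auto simp: tpoly_def)
    have ch: "?p \<in> thprod (tpoly_of_list [r, 1]) q \<longleftrightarrow>
      ?p 0 = r * q 0 \<and> (\<forall>j. ?p (Suc j) \<in> thadd (r * q (Suc j)) (q j))"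
      using thprod_char[of r q ?p] assms d by simp
    show "?p \<in> thprod (tpoly_of_list [r, 1]) q
            \<longleftrightarrow> (\<exists>s. 0 \<le> s \<and> s \<le> r \<and> q = tpoly_of_list [1, s, 1])"
    proof
      assume "?p \<in> thprod (tpoly_of_list [r, 1]) q"
      then have h0: "?p 0 = r * q 0" and hS: "\<And>j. ?p (Suc j) \<in> thadd (r * q (Suc j)) (q j)"
        using ch by auto
      have q0: "q 0 = 1" using h0 assms by (simp add: tpoly_of_list_def)
      have rec: "q n = r * q (Suc n)" if "n \<ge> 3" for n
      proof -
        have "?p (Suc n) = 0" using that by (simp add: tpoly_of_list_def)
        then have "0 \<in> thadd (r * q (Suc n)) (q n)" using hS[of n] by simp
        moreover have "0 \<le> r * q (Suc n)" "0 \<le> q n" using d assms by auto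
        ultimately show ?thesis by (auto simp: thadd_mem max_def split: if_splits)
      qed
      have z: "q n = 0" if "n \<ge> 3" for n
      proof (rule ccontr)
        assume nz: "q n \<noteq> 0"
        have "q (n + k) \<noteq> 0" for k
        proof (induction k)
          case 0 then show ?case using nz by simp
        next
          case (Suc k)
          then show ?case using rec[of "n + k"] that by auto
        qed
        then have "{n..} \<subseteq> {i. q i \<noteq> 0}"
          by (metis (mono_tags, lifting) atLeast_iff le_Suc_ex mem_Collect_eq subsetI)
        then have "finite {n..}" using fin finite_subset by blast
        then show False using infinite_Ici[of n] by simp
      qed
      have h3: "?p 3 \<in> thadd (r * q 3) (q 2)" using hS[of 2] by (simp add: numeral_eq_Suc)
      then have q2: "q 2 = 1" using z[of 3] by (simp add: tpoly_of_list_def thadd_mem max_def split: if_splits)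
      have h2: "?p 2 \<in> thadd (r * q 2) (q 1)" using hS[of 1] by (simp add: numeral_eq_Suc)
      then have q1: "q 1 \<le> r" using q2 d by (simp add: tpoly_of_list_def thadd_mem max_def split: if_splits)
      have "q = tpoly_of_list [1, q 1, 1]"
      proof
        fix i
        show "q i = tpoly_of_list [1, q 1, 1] i"
        proof (cases "i \<ge> 3")
          case True then show ?thesis using z by (simp add: tpoly_of_list_def)
        next
          case False
          then have "i = 0 \<or> i = 1 \<or> i = 2" by auto
          then show ?thesis using q0 q2 by (auto simp: tpoly_of_list_def)
        qed
      qed
      then show "\<exists>s. 0 \<le> s \<and> s \<le> r \<and> q = tpoly_of_list [1, s, 1]"
        using q1 d by blast
    next
      assume "\<exists>s. 0 \<le> s \<and> s \<le> r \<and> q = tpoly_of_list [1, s, 1]"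
      then obtain s where s: "0 \<le> s" "s \<le> r" and qe: "q = tpoly_of_list [1, s, 1]" by blast
      have rs: "r * s < 1"
      proof -
        have "r * s \<le> r * 1" by (rule mult_left_mono) (use s assms in auto)
        then show ?thesis using assms by linarith
      qed
      have "?p (Suc j) \<in> thadd (r * q (Suc j)) (q j)" for j
      proof -
        consider "j = 0" | "j = 1" | "j = 2" | "j \<ge> 3" by linarith
        then show ?thesis
        proof cases
          case 1 then show ?thesis using rs s by (simp add: qe tpoly_of_list_def thadd_mem max_def)
        next
          case 2 then show ?thesis using rs s assms by (simp add: qe tpoly_of_list_def thadd_mem max_def)
        next
          case 3 then show ?thesis by (simp add: qe tpoly_of_list_def thadd_mem max_def)
        next
          case 4 then show ?thesis by (simp add: qe tpoly_of_list_def thadd_mem max_def)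
        qed
      qed
      moreover have "?p 0 = r * q 0" by (simp add: qe tpoly_of_list_def)
      ultimately show "?p \<in> thprod (tpoly_of_list [r, 1]) q" using ch by simp
    qed
  qed
next
  let ?p = "tpoly_of_list [r, 1, r, 1]"
  let ?q = "tpoly_of_list [1, 1 / r, 1 / r ^ 2]"
  have d: "\<forall>i. 0 \<le> ?q i" using assms by (simp add: tpoly_of_list_def nth_Cons')
  show "?p \<notin> thprod (tpoly_of_list [r, 1]) ?q"
  proof
    assume "?p \<in> thprod (tpoly_of_list [r, 1]) ?q"
    then have "?p 3 \<in> thadd (r * ?q 3) (?q 2)"
      using thprod_char[of r ?q ?p] assms d by (auto simp: numeral_eq_Suc simp del: One_nat_def)
    moreover have "1 / r ^ 2 \<noteq> 1"
    proof -
      have "r ^ 2 < 1" using assms by (simp add: power_less_one_iff)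
      then show ?thesis by auto
    qed
    ultimately show False using assms by (simp add: tpoly_of_list_def thadd_mem max_def split: if_splits)
  qed
qed

end
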